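(* Let $k\in\mathbb{N}^\ast$ and let $T_k$ be a random variable with Gamma distribution of shape $k$ and rate $1$. Let $\beta>0$, $K_0>0$ and let $Y$ be a non-negative random variable with $\mathbb{E}[e^{\beta T_k}Y]\le K_0$. Then for every $c_0>1$ and $c_1\in(0,1)$, with probability at least $1-\frac{1}{c_0}-e^{-(c_1-1-\log(c_1))k}$, $$Y\le c_0K_0e^{-\beta c_1k}.$$ *)

theory Defs
  imports "HOL-Probability.Probability"
begin

end

theory Submission
  imports Defs
begin

lemma erlang_chernoff:
  fixes c :: real and k :: nat
  assumes c: "0 < c" "c < 1" and k: "k \<ge> 1"
  shows "erlang_CDF (k - 1) 1 (c * real k) \<le> exp (- (c - 1 - ln c) * real k)"
proof -
  define lam where "lam = 1 / c - 1"
  define a where "a = c * real k"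
  define C where "C = exp (lam * a) * c ^ k"
  have lam0: "lam \<ge> 0" using c by (simp add: lam_def field_simps)
  have a0: "a \<ge> 0" using c by (simp add: a_def)
  have C0: "C \<ge> 0" using c by (simp add: C_def)
  have pt: "erlang_density (k - 1) 1 x * indicator {..a} x \<le> C * erlang_density (k - 1) (1 / c) x" for x
  proof (cases "x < 0")
    case True then show ?thesis by (simp add: erlang_density_def)
  next
    case False
    have sk: "Suc (k - 1) = k" using k by simp
    have "erlang_density (k - 1) 1 x * indicator {..a} x \<le> exp (lam * (a - x)) * erlang_density (k - 1) 1 x"
    proof (cases "x \<le> a")
      case True
      then have "exp (lam * (a - x)) \<ge> 1" using lam0 by simp
      moreover have "erlang_density (k - 1) 1 x \<ge> 0" by simp
      ultimately have "erlang_density (k - 1) 1 x * 1 \<le> erlang_density (k - 1) 1 x * exp (lam * (a - x))"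
        by (intro mult_left_mono) auto
      then show ?thesis using True by (simp add: mult.commute)
    next
      case False then show ?thesis by simp
    qed
    also have "\<dots> = C * erlang_density (k - 1) (1 / c) x"
    proof -
      have e: "exp (lam * (a - x)) * exp (- x) = exp (lam * a) * exp (- (1 / c) * x)"
        unfolding mult_exp_exp by (rule arg_cong[where f=exp]) (simp add: lam_def algebra_simps diff_divide_distrib)
      have cp: "c ^ k * (1 / c) ^ k = 1" using c by (simp add: power_mult_distrib[symmetric])
      have "exp (lam * (a - x)) * erlang_density (k - 1) 1 x
          = (exp (lam * (a - x)) * exp (- x)) * (x ^ (k - 1) / fact (k - 1))"
        using False by (simp add: erlang_density_def)
      also have "\<dots> = exp (lam * a) * exp (- (1 / c) * x) * (x ^ (k - 1) / fact (k - 1))"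
        using e by simp
      also have "\<dots> = exp (lam * a) * (c ^ k * (1 / c) ^ k) * exp (- (1 / c) * x) * (x ^ (k - 1) / fact (k - 1))"
        using cp by simp
      also have "\<dots> = C * ((1 / c) ^ k * x ^ (k - 1) * exp (- (1 / c) * x) / fact (k - 1))"
        unfolding C_def by (simp only: mult_ac times_divide_eq_right)
      also have "\<dots> = C * erlang_density (k - 1) (1 / c) x"
        using False by (simp only: erlang_density_def sk if_False not_less[symmetric])
      finally show ?thesis .
    qed
    finally show ?thesis .
  qed
  have "ennreal (erlang_CDF (k - 1) 1 a) = (\<integral>\<^sup>+ x. ennreal (erlang_density (k - 1) 1 x) * indicator {..a} x \<partial>lborel)"
    by (simp add: nn_integral_erlang_density)
  also have "\<dots> = (\<integral>\<^sup>+ x. ennreal (erlang_density (k - 1) 1 x * indicator {..a} x) \<partial>lborel)"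
    by (intro nn_integral_cong) (simp add: indicator_def)
  also have "\<dots> \<le> (\<integral>\<^sup>+ x. ennreal C * ennreal (erlang_density (k - 1) (1 / c) x * x ^ 0) \<partial>lborel)"
    using pt C0 c by (intro nn_integral_mono) (simp add: ennreal_mult[symmetric] ennreal_leI)
  also have "\<dots> = ennreal C * (\<integral>\<^sup>+ x. ennreal (erlang_density (k - 1) (1 / c) x * x ^ 0) \<partial>lborel)"
    by (rule nn_integral_cmult) simp
  also have "\<dots> = ennreal C"
    using c by (subst nn_integral_erlang_ith_moment) auto
  finally have "erlang_CDF (k - 1) 1 a \<le> C"
    using C0 by (simp add: ennreal_le_iff)
  also have "C = exp (- (c - 1 - ln c) * real k)"
  proof -
    have la: "lam * a = (1 - c) * real k" using c by (simp add: lam_def a_def field_simps)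
    have ck: "c ^ k = exp (real k * ln c)" using c by (simp add: exp_of_nat_mult)
    show ?thesis unfolding C_def la ck mult_exp_exp
      by (rule arg_cong[where f=exp]) (simp add: algebra_simps)
  qed
  finally show ?thesis unfolding a_def .
qed


theorem proposition4:
  fixes M :: "'a measure" and T Y :: "'a \<Rightarrow> real"
    and k :: nat and \<beta> K\<^sub>0 c\<^sub>0 c\<^sub>1 :: real
  assumes "prob_space M"
    and "k \<ge> 1"
    and "distributed M lborel T (erlang_density (k - 1) 1)"
    and "\<beta> > 0" and "K\<^sub>0 > 0"
    and "Y \<in> borel_measurable M"
    and "\<forall>x\<in>space M. Y x \<ge> 0"
    and "(\<integral>\<^sup>+ x. ennreal (exp (\<beta> * T x) * Y x) \<partial>M) \<le> ennreal K\<^sub>0"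
    and "c\<^sub>0 > 1" and "0 < c\<^sub>1" and "c\<^sub>1 < 1"
  shows "measure M {x \<in> space M. Y x \<le> c\<^sub>0 * K\<^sub>0 * exp (- \<beta> * c\<^sub>1 * real k)}
           \<ge> 1 - 1 / c\<^sub>0 - exp (- (c\<^sub>1 - 1 - ln c\<^sub>1) * real k)"
proof -
  interpret prob_space M by fact
  note D = assms(3)
  have Tm[measurable]: "T \<in> borel_measurable M"
    using distributed_measurable[OF D] by simp
  have Ym[measurable]: "Y \<in> borel_measurable M" by fact
  define A where "A = {x \<in> space M. T x \<le> c\<^sub>1 * real k}"
  define B where "B = {x \<in> space M. c\<^sub>0 * K\<^sub>0 \<le> exp (\<beta> * T x) * Y x}"
  define G where "G = {x \<in> space M. Y x \<le> c\<^sub>0 * K\<^sub>0 * exp (- \<beta> * c\<^sub>1 * real k)}"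
  have As[measurable]: "A \<in> sets M" unfolding A_def by measurable
  have Bs[measurable]: "B \<in> sets M" unfolding B_def by measurable
  have Gs[measurable]: "G \<in> sets M" unfolding G_def by measurable
  have mA: "measure M A \<le> exp (- (c\<^sub>1 - 1 - ln c\<^sub>1) * real k)"
  proof -
    have "measure M A = erlang_CDF (k - 1) 1 (c\<^sub>1 * real k)"
      unfolding A_def using assms(10) by (intro erlang_distributed_le[OF D]) auto
    also have "\<dots> \<le> exp (- (c\<^sub>1 - 1 - ln c\<^sub>1) * real k)"
      using erlang_chernoff assms by blast
    finally show ?thesis .
  qed
  have mB: "measure M B \<le> 1 / c\<^sub>0"
  proof -
    let ?c = "ennreal (1 / (c\<^sub>0 * K\<^sub>0))"
    let ?u = "\<lambda>x. ennreal (exp (\<beta> * T x) * Y x)"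
    have "B \<subseteq> {x \<in> space M. 1 \<le> ?c * ?u x}"
    proof
      fix x assume x: "x \<in> B"
      then have "c\<^sub>0 * K\<^sub>0 \<le> exp (\<beta> * T x) * Y x" "x \<in> space M" by (auto simp: B_def)
      then have "1 \<le> 1 / (c\<^sub>0 * K\<^sub>0) * (exp (\<beta> * T x) * Y x)"
        using assms by (simp add: field_simps)
      then have "ennreal 1 \<le> ennreal (1 / (c\<^sub>0 * K\<^sub>0) * (exp (\<beta> * T x) * Y x))"
        by (rule ennreal_leI)
      moreover have h2: "ennreal (1 / (c\<^sub>0 * K\<^sub>0) * (exp (\<beta> * T x) * Y x)) = ?c * ?u x"
        using \<open>x \<in> space M\<close> assms by (intro ennreal_mult) auto
      ultimately have "1 \<le> ?c * ?u x" by (metis ennreal_1)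
      then show "x \<in> {x \<in> space M. 1 \<le> ?c * ?u x}"
        using \<open>x \<in> space M\<close> by simp
    qed
    then have "emeasure M B \<le> emeasure M {x \<in> space M. 1 \<le> ?c * ?u x}"
      by (intro emeasure_mono) auto
    also have "\<dots> \<le> ?c * (\<integral>\<^sup>+ x. ?u x * indicator (space M) x \<partial>M)"
      by (rule nn_integral_Markov_inequality) auto
    also have "(\<integral>\<^sup>+ x. ?u x * indicator (space M) x \<partial>M) = (\<integral>\<^sup>+ x. ?u x \<partial>M)"
      by (intro nn_integral_cong) auto
    also have "?c * (\<integral>\<^sup>+ x. ?u x \<partial>M) \<le> ?c * ennreal K\<^sub>0"
      using assms(8) by (intro mult_left_mono) auto
    also have "\<dots> = ennreal (1 / c\<^sub>0)"
      using assms by (simp add: ennreal_mult''[symmetric] field_simps)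
    finally show ?thesis
      using assms by (simp add: emeasure_eq_measure ennreal_le_iff)
  qed
  have sub: "space M - (A \<union> B) \<subseteq> G"
  proof
    fix x assume x: "x \<in> space M - (A \<union> B)"
    then have xs: "x \<in> space M" and T1: "c\<^sub>1 * real k < T x"
      and Z: "exp (\<beta> * T x) * Y x < c\<^sub>0 * K\<^sub>0"
      by (auto simp: A_def B_def)
    have Y0: "Y x \<ge> 0" using assms(7) xs by auto
    have "Y x = exp (- \<beta> * T x) * (exp (\<beta> * T x) * Y x)"
      by (simp add: exp_minus field_simps)
    also have "\<dots> \<le> exp (- \<beta> * c\<^sub>1 * real k) * (c\<^sub>0 * K\<^sub>0)"
    proof (rule mult_mono)
      show "exp (- \<beta> * T x) \<le> exp (- \<beta> * c\<^sub>1 * real k)"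
        using T1 assms(4) by simp
    qed (use Z Y0 in auto)
    finally show "x \<in> G" using xs by (simp add: G_def mult.commute)
  qed
  have "measure M (space M - (A \<union> B)) \<le> measure M G"
    using sub by (intro finite_measure_mono) auto
  moreover have "measure M (space M - (A \<union> B)) = 1 - measure M (A \<union> B)"
    using As Bs by (simp add: prob_compl)
  moreover have "measure M (A \<union> B) \<le> measure M A + measure M B"
    using As Bs by (rule measure_Un_le)
  ultimately show ?thesis using mA mB unfolding G_def by linarith
qed

end
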